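(* Let $N\in\mathbb{N}$ and $X_1,X_2\subseteq[N]$, $X=(X_1,X_2)$, and let $\mu=\mathbb{E}_{\sigma\sim S_N}[|X_\sigma|]$ (uniform $\sigma$). Then for every real $u\ge 6\mu$, $$\Pr_{\pi\sim S_N}\big[|X_\pi|\ge \mu+u\big]\le \exp\!\left(-\tfrac34 u\right).$$
   Context: For $\pi\in S_N$, $X_\pi=\{(i,j): i\in X_1,\ j\in X_2,\ \pi(i)=j\}$ is the set of $X$-pairs of $\pi$; $\pi\sim S_N$ denotes a uniformly random permutation. *)

theory Defs
  imports "HOL-Probability.Probability" "HOL-Combinatorics.Permutations"
begin

definition X_pairs :: "nat set \<Rightarrow> nat set \<Rightarrow> (nat \<Rightarrow> nat) \<Rightarrow> (nat \<times> nat) set" where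
  "X_pairs X1 X2 \<pi> = {(i, j). i \<in> X1 \<and> j \<in> X2 \<and> \<pi> i = j}"

definition unif_perm :: "nat \<Rightarrow> (nat \<Rightarrow> nat) pmf" where
  "unif_perm N = pmf_of_set {\<pi>. \<pi> permutes {1..N}}"

end

theory Submission
  imports Defs
begin


lemma perm_exists:
  assumes "finite S" "B \<subseteq> S" "B' \<subseteq> S" "card B = card B'"
  shows "\<exists>\<tau>. \<tau> permutes S \<and> \<tau> ` B = B'"
proof -
  obtain f where f: "bij_betw f B B'"
    using finite_same_card_bij assms by (meson finite_subset)
  have "card (S - B) = card (S - B')"
    using assms by (simp add: card_Diff_subset finite_subset)
  then obtain g where g: "bij_betw g (S - B) (S - B')"
    using finite_same_card_bij assms by (meson finite_Diff)
  define \<tau> where "\<tau> = (\<lambda>x. if x \<in> B then f x else if x \<in> S then g x else x)"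
  have 1: "bij_betw \<tau> B B'" using f by (rule bij_betw_cong[THEN iffD1, rotated]) (simp add: \<tau>_def)
  have 2: "bij_betw \<tau> (S - B) (S - B')" using g by (rule bij_betw_cong[THEN iffD1, rotated]) (simp add: \<tau>_def)
  have "bij_betw \<tau> (B \<union> (S - B)) (B' \<union> (S - B'))"
    by (rule bij_betw_combine[OF 1 2]) auto
  moreover have "B \<union> (S - B) = S" "B' \<union> (S - B') = S" using assms by auto
  ultimately have "bij_betw \<tau> S S" by simp
  moreover have "\<And>x. x \<notin> S \<Longrightarrow> \<tau> x = x" using assms by (auto simp: \<tau>_def)
  ultimately have "\<tau> permutes S" by (rule bij_imp_permutes)
  moreover have "\<tau> ` B = B'" using 1 by (simp add: bij_betw_def)
  ultimately show ?thesis by blast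
qed

lemma count_eq:
  assumes "finite S" "A \<subseteq> S" "B \<subseteq> S" "B' \<subseteq> S" "card B = card A" "card B' = card A"
  shows "card {p. p permutes S \<and> p ` A = B} = card {p. p permutes S \<and> p ` A = B'}"
proof -
  obtain \<tau> where t: "\<tau> permutes S" "\<tau> ` B = B'" using perm_exists[of S B B'] assms by auto
  have inj: "inj_on (\<lambda>p. \<tau> \<circ> p) X" for X
    using permutes_inj[OF t(1)] unfolding inj_on_def fun_eq_iff inj_def o_def by blast
  have "(\<lambda>p. \<tau> \<circ> p) ` {p. p permutes S \<and> p ` A = B} = {p. p permutes S \<and> p ` A = B'}"
  proof (rule set_eqI, rule iffI)
    fix q assume "q \<in> (\<lambda>p. \<tau> \<circ> p) ` {p. p permutes S \<and> p ` A = B}"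
    then obtain p where p: "p permutes S" "p ` A = B" "q = \<tau> \<circ> p" by blast
    then show "q \<in> {p. p permutes S \<and> p ` A = B'}"
      proof -
      have "(\<tau> \<circ> p) ` A = \<tau> ` (p ` A)" by (rule image_comp[symmetric])
      then show ?thesis using t(2) p(2) permutes_compose[OF p(1) t(1)] p(3) by simp
    qed
  next
    fix q assume "q \<in> {p. p permutes S \<and> p ` A = B'}"
    then have q: "q permutes S" "q ` A = B'" by auto
    have "inv \<tau> ` B' = B" unfolding t(2)[symmetric] image_comp
      using permutes_inv_o(2)[OF t(1)] by simp
    then have "(inv \<tau> \<circ> q) ` A = B" using q unfolding image_comp[symmetric] by simp
    moreover have "inv \<tau> \<circ> q permutes S" using permutes_compose[OF q(1) permutes_inv[OF t(1)]] .
    moreover have "q = \<tau> \<circ> (inv \<tau> \<circ> q)" using permutes_inverses[OF t(1)] by (auto simp: fun_eq_iff)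
    ultimately show "q \<in> (\<lambda>p. \<tau> \<circ> p) ` {p. p permutes S \<and> p ` A = B}" by blast
  qed
  then show ?thesis using card_image[OF inj, of "{p. p permutes S \<and> p ` A = B}"] by simp
qed

lemma count_val:
  assumes "finite S" "A \<subseteq> S" "B \<subseteq> S" "card B = card A"
  shows "card {p. p permutes S \<and> p ` A = B} * (card S choose card A) = fact (card S)"
proof -
  define P where "P = {p. p permutes S}"
  define K where "K = {B. B \<subseteq> S \<and> card B = card A}"
  have fP: "finite P" unfolding P_def using finite_permutations[OF assms(1)] .
  have fK: "finite K" unfolding K_def using assms(1) by simp
  have img: "(\<lambda>p. p ` A) ` P \<subseteq> K"
  proof
    fix X assume "X \<in> (\<lambda>p. p ` A) ` P"
    then obtain p where p: "p permutes S" "X = p ` A" unfolding P_def by auto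
    have "p ` A \<subseteq> S" using assms(2) by (auto simp: permutes_in_image[OF p(1)])
    moreover have "card (p ` A) = card A" using card_image[OF permutes_inj_on[OF p(1)]] .
    ultimately show "X \<in> K" unfolding K_def p(2) by simp
  qed
  have "fact (card S) = card P" unfolding P_def using card_permutations[OF refl assms(1)] by simp
  also have "\<dots> = (\<Sum>p\<in>P. 1::nat)" by simp
  also have "\<dots> = (\<Sum>B'\<in>K. sum (\<lambda>_. 1::nat) {p \<in> P. p ` A = B'})"
    using sum.group[OF fP fK img, of "\<lambda>_. 1::nat"] by simp
  also have "\<dots> = (\<Sum>B'\<in>K. card {p. p permutes S \<and> p ` A = B})"
  proof (rule sum.cong[OF refl])
    fix B' assume "B' \<in> K"
    then have "card {p. p permutes S \<and> p ` A = B'} = card {p. p permutes S \<and> p ` A = B}"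
      using count_eq[of S A B' B] assms unfolding K_def by auto
    moreover have "{p \<in> P. p ` A = B'} = {p. p permutes S \<and> p ` A = B'}" unfolding P_def by auto
    ultimately show "sum (\<lambda>_. 1::nat) {p \<in> P. p ` A = B'} = card {p. p permutes S \<and> p ` A = B}" by simp
  qed
  also have "\<dots> = card K * card {p. p permutes S \<and> p ` A = B}" by simp
  also have "card K = card S choose card A" unfolding K_def using n_subsets[OF assms(1)] .
  finally show ?thesis by simp
qed

lemma count_sub:
  assumes "finite S" "A \<subseteq> S" "X2 \<subseteq> S"
  shows "card {p. p permutes S \<and> p ` A \<subseteq> X2} * (card S choose card A) = (card X2 choose card A) * fact (card S)"
proof -
  define P where "P = {p. p permutes S \<and> p ` A \<subseteq> X2}"
  define K where "K = {B. B \<subseteq> X2 \<and> card B = card A}"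
  have fX: "finite X2" using assms finite_subset by blast
  have fP: "finite P" unfolding P_def using finite_permutations[OF assms(1)]
    by (rule finite_subset[rotated]) auto
  have fK: "finite K" unfolding K_def using fX by simp
  have img: "(\<lambda>p. p ` A) ` P \<subseteq> K"
  proof
    fix X assume "X \<in> (\<lambda>p. p ` A) ` P"
    then obtain p where p: "p permutes S" "p ` A \<subseteq> X2" "X = p ` A" unfolding P_def by auto
    have "card (p ` A) = card A" using card_image[OF permutes_inj_on[OF p(1)]] .
    then show "X \<in> K" unfolding K_def p(3) using p(2) by simp
  qed
  have "card P * (card S choose card A) = (\<Sum>p\<in>P. 1::nat) * (card S choose card A)" by simp
  also have "\<dots> = (\<Sum>B'\<in>K. sum (\<lambda>_. 1::nat) {p \<in> P. p ` A = B'}) * (card S choose card A)"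
    using sum.group[OF fP fK img, of "\<lambda>_. 1::nat"] by simp
  also have "\<dots> = (\<Sum>B'\<in>K. card {p. p permutes S \<and> p ` A = B'} * (card S choose card A))"
  proof -
    have "\<And>B'. B' \<in> K \<Longrightarrow> {p \<in> P. p ` A = B'} = {p. p permutes S \<and> p ` A = B'}"
      unfolding P_def K_def by auto
    then show ?thesis by (simp add: sum_distrib_right)
  qed
  also have "\<dots> = (\<Sum>B'\<in>K. fact (card S))"
    by (rule sum.cong[OF refl], rule count_val) (use assms in \<open>auto simp: K_def\<close>)
  also have "\<dots> = card K * fact (card S)" by simp
  also have "card K = card X2 choose card A" unfolding K_def using n_subsets[OF fX] .
  finally show ?thesis unfolding P_def .
qed



lemma exp_term_le:
  assumes "(x::real) \<ge> 0"
  shows "x ^ k / fact k \<le> exp x"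
proof -
  have s: "(\<lambda>n. x ^ n / fact n) sums exp x" using exp_converges[of x] by (simp add: divide_inverse mult.commute)
  have "(\<Sum>n\<in>{k}. x ^ n / fact n) \<le> (\<Sum>n. x ^ n / fact n)"
    by (rule sum_le_suminf) (use s assms in \<open>auto simp: sums_iff\<close>)
  then show ?thesis using s by (simp add: sums_iff)
qed

lemma final_bound:
  fixes \<mu> u :: real
  assumes "\<mu> \<ge> 0" "u > 0" "6 * \<mu> \<le> u" "real k \<ge> \<mu> + u"
  shows "\<mu> ^ k / fact k \<le> exp (- (3/4) * u)"
proof -
  have k0: "real k \<ge> 0" by simp
  have "\<mu> ^ k \<le> (real k / 7) ^ k" using assms by (intro power_mono) auto
  then have "\<mu> ^ k / fact k \<le> (real k / 7) ^ k / fact k" by (simp add: divide_right_mono)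
  also have "\<dots> = (real k ^ k / fact k) / 7 ^ k" by (simp add: power_divide)
  also have "\<dots> \<le> exp (real k) / 7 ^ k" using exp_term_le[OF k0, of k] by (intro divide_right_mono) auto
  also have "\<dots> \<le> exp (- (3/4) * real k)"
  proof -
    have "exp (7/4::real) ^ 4 = exp 7" by (simp flip: exp_of_nat_mult)
    also have "\<dots> = exp 1 ^ 7" by (simp flip: exp_of_nat_mult)
    also have "\<dots> \<le> 3 ^ 7" using exp_le by (intro power_mono) auto
    also have "\<dots> < 7 ^ 4" by simp
    finally have "exp (7/4::real) < 7" by (rule power_less_imp_less_base) simp
    then have "exp (7/4::real) ^ k \<le> 7 ^ k" by (intro power_mono) auto
    then have "exp (real k * (7/4)) \<le> 7 ^ k" by (simp only: exp_of_nat_mult)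
    moreover have "exp (real k * (7/4)) = exp (real k) * exp (3/4 * real k)"
      by (simp flip: exp_add)
    ultimately have "exp (real k) * exp (3/4 * real k) \<le> 7 ^ k" by simp
    then have "exp (real k) \<le> 7 ^ k * exp (- (3/4) * real k)"
      by (simp add: exp_minus field_simps)
    then show ?thesis by (simp add: field_simps)
  qed
  also have "\<dots> \<le> exp (- (3/4) * u)" using assms by simp
  finally show ?thesis .
qed

lemma choose_Suc_mult: "Suc k * (n choose Suc k) = (n - k) * (n choose k)"
  by (metis binomial_absorption binomial_absorb_comp)

lemma choose_ratio:
  assumes "b \<le> (n::nat)"
  shows "(b choose k) * n ^ k \<le> (n choose k) * b ^ k"
proof (induction k)
  case 0 then show ?case by simp
next
  case (Suc k)
  have key: "(b - k) * n \<le> (n - k) * b"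
  proof (cases "k \<le> b")
    case True
    have "(b - k) * n = b * n - k * n" by (simp add: diff_mult_distrib)
    also have "\<dots> \<le> b * n - k * b" using assms by (intro diff_le_mono2) simp
    also have "\<dots> = (n - k) * b" by (simp add: diff_mult_distrib mult.commute[of b n])
    finally show ?thesis .
  qed simp
  have "Suc k * ((b choose Suc k) * n ^ Suc k) = (Suc k * (b choose Suc k)) * (n * n ^ k)"
    by (simp only: power_Suc ac_simps)
  also have "\<dots> = ((b - k) * (b choose k)) * (n * n ^ k)" by (simp only: choose_Suc_mult)
  also have "\<dots> = ((b - k) * n) * ((b choose k) * n ^ k)" by (simp only: ac_simps)
  also have "\<dots> \<le> ((n - k) * b) * ((n choose k) * b ^ k)"
    using key Suc.IH by (rule mult_mono) auto
  also have "\<dots> = ((n - k) * (n choose k)) * (b * b ^ k)" by (simp only: ac_simps)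
  also have "\<dots> = (Suc k * (n choose Suc k)) * (b * b ^ k)" by (simp only: choose_Suc_mult)
  also have "\<dots> = Suc k * ((n choose Suc k) * b ^ Suc k)" by (simp only: power_Suc ac_simps)
  finally show ?case by (simp only: mult_le_cancel1)
qed


lemma card_filter_sum: "finite A \<Longrightarrow> card {x \<in> A. P x} = (\<Sum>x\<in>A. if P x then 1 else (0::nat))"
  by (simp add: sum.inter_filter[symmetric])

theorem theorem3:
  fixes N :: nat and X1 X2 :: "nat set" and u \<mu> :: real
  assumes "X1 \<subseteq> {1..N}" and "X2 \<subseteq> {1..N}"
    and "\<mu> = measure_pmf.expectation (unif_perm N) (\<lambda>\<sigma>. real (card (X_pairs X1 X2 \<sigma>)))"
    and "u \<ge> 6 * \<mu>"
  shows "measure_pmf.prob (unif_perm N) {\<pi>. real (card (X_pairs X1 X2 \<pi>)) \<ge> \<mu> + u}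
           \<le> exp (- (3/4) * u)"
proof -
  define S where "S = {1..N}"
  define P where "P = {p. p permutes S}"
  define Y where "Y p = card {i \<in> X1. p i \<in> X2}" for p :: "nat \<Rightarrow> nat"
  define a where "a = card X1"
  define b where "b = card X2"
  have fS: "finite S" and cS: "card S = N" unfolding S_def by auto
  have X1S: "X1 \<subseteq> S" and X2S: "X2 \<subseteq> S" using assms unfolding S_def by auto
  have fX1: "finite X1" and fX2: "finite X2" using X1S X2S fS finite_subset by auto
  have fP: "finite P" unfolding P_def using finite_permutations[OF fS] .
  have cP: "card P = fact N" unfolding P_def using card_permutations[OF cS fS] .
  have Pne: "P \<noteq> {}" unfolding P_def using permutes_id by blast
  have XY: "card (X_pairs X1 X2 p) = Y p" for p
  proof -
    have "X_pairs X1 X2 p = (\<lambda>i. (i, p i)) ` {i \<in> X1. p i \<in> X2}" by (auto simp: X_pairs_def)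
    moreover have "inj_on (\<lambda>i. (i, p i)) {i \<in> X1. p i \<in> X2}" by (auto simp: inj_on_def)
    ultimately show ?thesis unfolding Y_def by (simp add: card_image)
  qed
  have unif: "unif_perm N = pmf_of_set P" unfolding unif_perm_def P_def S_def ..
  have Yle: "Y p \<le> a" for p unfolding Y_def a_def using fX1 by (intro card_mono) auto
  have sumY: "(\<Sum>p\<in>P. Y p) * N = a * b * fact N"
  proof -
    have "(\<Sum>p\<in>P. Y p) = (\<Sum>p\<in>P. \<Sum>i\<in>X1. if p i \<in> X2 then 1 else (0::nat))"
      unfolding Y_def using fX1 by (simp add: card_filter_sum)
    also have "\<dots> = (\<Sum>i\<in>X1. \<Sum>p\<in>P. if p i \<in> X2 then 1 else (0::nat))" by (rule sum.swap)
    also have "\<dots> = (\<Sum>i\<in>X1. card {p. p permutes S \<and> p ` {i} \<subseteq> X2})"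
    proof (rule sum.cong[OF refl])
      fix i assume "i \<in> X1"
      have "{p. p permutes S \<and> p ` {i} \<subseteq> X2} = {p \<in> P. p i \<in> X2}" unfolding P_def by auto
      then show "(\<Sum>p\<in>P. if p i \<in> X2 then 1 else (0::nat)) = card {p. p permutes S \<and> p ` {i} \<subseteq> X2}"
        using fP by (simp add: card_filter_sum)
    qed
    finally have "(\<Sum>p\<in>P. Y p) * N = (\<Sum>i\<in>X1. card {p. p permutes S \<and> p ` {i} \<subseteq> X2} * (card S choose card {i}))"
      by (simp add: sum_distrib_right cS)
    also have "\<dots> = (\<Sum>i\<in>X1. (card X2 choose card {i}) * fact (card S))"
      by (rule sum.cong[OF refl], rule count_sub) (use fS X1S X2S in auto)
    also have "\<dots> = a * b * fact N" by (simp add: a_def b_def cS)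
    finally show ?thesis .
  qed
  have mu: "\<mu> = (\<Sum>p\<in>P. real (Y p)) / fact N"
    unfolding assms(3) unif using fP Pne by (simp add: integral_pmf_of_set XY cP)
  have mu0: "\<mu> \<ge> 0" unfolding mu by (simp add: sum_nonneg)
  have muN: "\<mu> = real a * real b / real N"
  proof (cases "N = 0")
    case True
    then have "X1 = {}" using X1S unfolding S_def by auto
    then show ?thesis unfolding mu a_def Y_def by simp
  next
    case False
    have "(\<Sum>p\<in>P. real (Y p)) * real N = real a * real b * fact N"
      using arg_cong[OF sumY, of real] by (simp add: of_nat_sum[symmetric] del: of_nat_sum)
    then show ?thesis unfolding mu using False by (simp add: field_simps)
  qed
  show ?thesis
  proof (cases "u = 0")
    case True
    then show ?thesis by simp
  next
    case False
    then have u0: "u > 0" using assms(4) mu0 by linarith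
    define k where "k = nat \<lceil>\<mu> + u\<rceil>"
    have kge: "real k \<ge> \<mu> + u" unfolding k_def by linarith
    have k1: "k \<ge> 1" using kge u0 mu0 by linarith
    have ev: "P \<inter> {\<pi>. real (card (X_pairs X1 X2 \<pi>)) \<ge> \<mu> + u} = {p \<in> P. k \<le> Y p}"
    proof -
      have "real (Y p) \<ge> \<mu> + u \<longleftrightarrow> k \<le> Y p" for p
        unfolding k_def by (simp add: nat_le_iff ceiling_le_iff)
      then show ?thesis by (auto simp: XY)
    qed
    have prob: "measure_pmf.prob (unif_perm N) {\<pi>. real (card (X_pairs X1 X2 \<pi>)) \<ge> \<mu> + u}
        = real (card {p \<in> P. k \<le> Y p}) / fact N"
      unfolding unif using fP Pne by (simp add: measure_pmf_of_set ev cP)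
    have bound: "real (card {p \<in> P. k \<le> Y p}) / fact N \<le> \<mu> ^ k / fact k"
    proof (cases "k \<le> a")
      case False
      then have "{p \<in> P. k \<le> Y p} = {}" using Yle by (auto simp: not_le intro: le_less_trans)
      then have "card {p \<in> P. k \<le> Y p} = 0" by (simp only: card.empty)
      then show ?thesis using mu0 by (simp only: of_nat_0 div_0) simp
    next
      case True
      have aN: "a \<le> N" unfolding a_def using card_mono[OF fS X1S] cS by simp
      have bN: "b \<le> N" unfolding b_def using card_mono[OF fS X2S] cS by simp
      have kN: "k \<le> N" using True aN by simp
      define KA where "KA = {A. A \<subseteq> X1 \<and> card A = k}"
      have fKA: "finite KA" unfolding KA_def using fX1 by simp
      define c where "c = card {p \<in> P. k \<le> Y p}"
      have sub: "{p \<in> P. k \<le> Y p} \<subseteq> (\<Union>A\<in>KA. {p. p permutes S \<and> p ` A \<subseteq> X2})"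
      proof
        fix p assume "p \<in> {p \<in> P. k \<le> Y p}"
        then have p: "p permutes S" "k \<le> card {i \<in> X1. p i \<in> X2}" unfolding P_def Y_def by auto
        then obtain A where A: "A \<subseteq> {i \<in> X1. p i \<in> X2}" "card A = k" by (meson obtain_subset_with_card_n)
        then have "A \<in> KA" "p ` A \<subseteq> X2" unfolding KA_def by auto
        then show "p \<in> (\<Union>A\<in>KA. {p. p permutes S \<and> p ` A \<subseteq> X2})" using p by blast
      qed
      have "c \<le> card (\<Union>A\<in>KA. {p. p permutes S \<and> p ` A \<subseteq> X2})"
        unfolding c_def
        by (rule card_mono[OF _ sub], rule finite_subset[OF _ finite_permutations[OF fS]]) auto
      also have "\<dots> \<le> (\<Sum>A\<in>KA. card {p. p permutes S \<and> p ` A \<subseteq> X2})" by (rule card_UN_le[OF fKA])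
      finally have "c * (N choose k) \<le> (\<Sum>A\<in>KA. card {p. p permutes S \<and> p ` A \<subseteq> X2}) * (N choose k)"
        by (rule mult_right_mono) simp
      also have "\<dots> = (\<Sum>A\<in>KA. card {p. p permutes S \<and> p ` A \<subseteq> X2} * (card S choose card A))"
        unfolding sum_distrib_right by (rule sum.cong[OF refl]) (simp add: KA_def cS)
      also have "\<dots> = (\<Sum>A\<in>KA. (card X2 choose card A) * fact (card S))"
        by (rule sum.cong[OF refl], rule count_sub) (use fS X1S X2S in \<open>auto simp: KA_def\<close>)
      also have "\<dots> = (a choose k) * (b choose k) * fact N"
        by (simp add: KA_def n_subsets[OF fX1] a_def b_def cS)
      finally have c1: "c * (N choose k) \<le> (a choose k) * (b choose k) * fact N" .
      have "(c * (N choose k)) * (N ^ k * fact k) \<le> ((a choose k) * (b choose k) * fact N) * (N ^ k * fact k)"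
        using c1 by (rule mult_right_mono) simp
      also have "\<dots> = ((a choose k) * fact k) * ((b choose k) * N ^ k) * fact N" by (simp only: ac_simps)
      also have "\<dots> \<le> a ^ k * ((N choose k) * b ^ k) * fact N"
        by (intro mult_mono binomial_fact_pow choose_ratio bN) auto
      finally have "(N choose k) * (c * N ^ k * fact k) \<le> (N choose k) * (a ^ k * b ^ k * fact N)"
        by (simp only: ac_simps)
      moreover have "(N choose k) > 0" using kN by simp
      ultimately have c2: "c * N ^ k * fact k \<le> a ^ k * b ^ k * fact N" by simp
      have N0: "N > 0" using kN k1 by simp
      have "real c * real N ^ k * fact k \<le> real a ^ k * real b ^ k * fact N"
        using c2 by (metis (mono_tags) of_nat_fact of_nat_le_iff of_nat_mult of_nat_power)
      then show ?thesis unfolding c_def[symmetric] muN using N0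
        by (simp add: power_divide power_mult_distrib field_simps)
    qed
    show ?thesis unfolding prob
      using bound final_bound[OF mu0 u0 _ kge] assms(4) by linarith
  qed
qed

end
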